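(* Let $A=\begin{pmatrix}a&\xi\\\overline\xi&c\end{pmatrix}$ and $B=\begin{pmatrix}1&0\\0&b\end{pmatrix}$ be positive definite ($a,c>0$, $b\ge1$, $|\xi|^2<ac$). Suppose that for some $m\ge0$, $a_j,b_j\in\mathbb{C}$ and $\alpha,\beta>0$ the nonzero function \[ \Phi=\sum_{j=0}^m\begin{pmatrix}a_j\phi^\alpha_j\\ b_j\phi^\beta_j\end{pmatrix} \] is an eigenfunction of $H_{A,B}$. Then either $\xi=0$ or $\alpha=\beta$.
   Context: $H_{A,B}:=B(-\partial_x^2)+Ax^2$ on $L^2(\mathbb{R};\mathbb{C}^2)$, self-adjoint on the domain of pairs of functions in $H^2(\mathbb{R})\cap\{f:\int|x^2f|^2<\infty\}$. For $\alpha>0$, $n\ge0$: $\phi^\alpha_n(x)=\alpha^{1/4}h_n(\alpha^{1/2}x)e^{-\alpha x^2/2}/\sqrt{2^nn!\sqrt\pi}$, where $h_n(x)=(-1)^ne^{x^2}\partial_x^n[e^{-x^2}]$ is the $n$-th Hermite polynomial. *)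

theory Defs
  imports "HOL-Analysis.Analysis"
begin

definition hermite_poly :: "nat \<Rightarrow> real \<Rightarrow> real" where
  "hermite_poly n x = (-1) ^ n * exp (x\<^sup>2) * (((deriv ^^ n) (\<lambda>t. exp (- (t\<^sup>2)))) x)"

definition hermite_fun :: "real \<Rightarrow> nat \<Rightarrow> real \<Rightarrow> real" where
  "hermite_fun \<alpha> n x =
     \<alpha> powr (1/4) * hermite_poly n (sqrt \<alpha> * x) * exp (- \<alpha> * x\<^sup>2 / 2)
       / sqrt (2 ^ n * fact n * sqrt pi)"

definition d2 :: "(real \<Rightarrow> complex) \<Rightarrow> real \<Rightarrow> complex" where
  "d2 f x = vector_derivative (\<lambda>t. vector_derivative f (at t)) (at x)"

text \<open>Action of H_{A,B} = B(-d^2/dx^2) + A x^2 with A = [[a, xi],[conj xi, c]],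
  B = diag(1, b), on a pair (f, g) of (smooth) functions.\<close>
definition H_AB :: "real \<Rightarrow> complex \<Rightarrow> real \<Rightarrow> real \<Rightarrow>
    ((real \<Rightarrow> complex) \<times> (real \<Rightarrow> complex)) \<Rightarrow> ((real \<Rightarrow> complex) \<times> (real \<Rightarrow> complex))" where
  "H_AB a \<xi> c b \<Phi> =
     ((\<lambda>x. - d2 (fst \<Phi>) x + complex_of_real (a * x\<^sup>2) * fst \<Phi> x + \<xi> * complex_of_real (x\<^sup>2) * snd \<Phi> x),
      (\<lambda>x. - complex_of_real b * d2 (snd \<Phi>) x + cnj \<xi> * complex_of_real (x\<^sup>2) * fst \<Phi> x
             + complex_of_real (c * x\<^sup>2) * snd \<Phi> x))"

definition is_eigenfunction_H :: "real \<Rightarrow> complex \<Rightarrow> real \<Rightarrow> real \<Rightarrow>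
    ((real \<Rightarrow> complex) \<times> (real \<Rightarrow> complex)) \<Rightarrow> bool" where
  "is_eigenfunction_H a \<xi> c b \<Phi> \<longleftrightarrow>
     \<Phi> \<noteq> ((\<lambda>_. 0), (\<lambda>_. 0)) \<and>
     (\<exists>E::complex. \<forall>x. fst (H_AB a \<xi> c b \<Phi>) x = E * fst \<Phi> x
                     \<and> snd (H_AB a \<xi> c b \<Phi>) x = E * snd \<Phi> x)"

end

theory Submission imports Defs "HOL-Computational_Algebra.Polynomial" "HOL-Computational_Algebra.Fundamental_Theorem_Algebra" "HOL-Real_Asymp.Real_Asymp"
begin

fun Hp :: "nat \<Rightarrow> real poly" where
  "Hp 0 = 1"
| "Hp (Suc n) = pderiv (Hp n) - [:0,2:] * Hp n"

lemma deriv_pexp: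
  fixes p :: "real poly"
  shows "deriv (\<lambda>t. poly p t * exp (- (t\<^sup>2))) = (\<lambda>t. poly (pderiv p - [:0,2:] * p) t * exp (- (t\<^sup>2)))"
proof
  fix t :: real
  have "((\<lambda>t. poly p t * exp (- (t\<^sup>2))) has_real_derivative
     (poly (pderiv p - [:0,2:] * p) t * exp (- (t\<^sup>2)))) (at t)"
    by (auto intro!: derivative_eq_intros simp: algebra_simps)
  then show "deriv (\<lambda>t. poly p t * exp (- (t\<^sup>2))) t = poly (pderiv p - [:0,2:] * p) t * exp (- (t\<^sup>2))"
    by (rule DERIV_imp_deriv)
qed

lemma derivs_gauss: "(deriv ^^ n) (\<lambda>t. exp (- (t\<^sup>2))) = (\<lambda>t. poly (Hp n) t * exp (- (t\<^sup>2)))"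
proof (induction n)
  case 0 then show ?case by simp
next
  case (Suc n) then show ?case by (simp add: deriv_pexp)
qed

lemma hermite_poly_eq: "hermite_poly n y = (-1)^n * poly (Hp n) y"
  unfolding hermite_poly_def derivs_gauss by (simp add: exp_minus field_simps)

definition Hs :: "real \<Rightarrow> nat \<Rightarrow> real poly" where
  "Hs \<alpha> n = smult (\<alpha> powr (1/4) * (-1)^n / sqrt (2 ^ n * fact n * sqrt pi)) (pcompose (Hp n) [:0, sqrt \<alpha>:])"

lemma hermite_fun_eq: "hermite_fun \<alpha> n x = poly (Hs \<alpha> n) x * exp (- \<alpha> * x\<^sup>2 / 2)"
  unfolding hermite_fun_def Hs_def hermite_poly_eq by (simp add: poly_pcompose mult.commute)

lemma poly_of_real: "poly (map_poly of_real p) (of_real x) = (complex_of_real (poly p x))"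
  by (induction p) (auto simp: map_poly_pCons)

definition U :: "real \<Rightarrow> complex poly \<Rightarrow> complex \<Rightarrow> complex" where
  "U \<gamma> P z = poly P z * exp (- of_real \<gamma> * z\<^sup>2 / 2)"

definition D :: "real \<Rightarrow> complex poly \<Rightarrow> complex poly" where
  "D \<gamma> P = pderiv P - [:0, of_real \<gamma>:] * P"

lemma U_deriv: "(U \<gamma> P has_field_derivative U \<gamma> (D \<gamma> P) z) (at z)"
  unfolding U_def D_def
  by (auto intro!: derivative_eq_intros simp: algebra_simps power2_eq_square)

lemma U_vd: "vector_derivative (\<lambda>x. U \<gamma> P (of_real x)) (at x) = U \<gamma> (D \<gamma> P) (of_real x)"
  by (rule vector_derivative_at, rule has_vector_derivative_real_field, rule U_deriv)

lemma U_d2: "d2 (\<lambda>x. U \<gamma> P (of_real x)) x = U \<gamma> (D \<gamma> (D \<gamma> P)) (of_real x)"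
  by (simp add: d2_def U_vd)

lemma U_real: "U \<gamma> P (of_real x) = poly P (of_real x) * of_real (exp (- \<gamma> * x\<^sup>2 / 2))"
  unfolding U_def by (simp flip: exp_of_real)

lemma gauss_lim:
  assumes "\<delta> > 0"
  shows "((\<lambda>x::real. poly R (complex_of_real x) * of_real (exp (- \<delta> * x\<^sup>2))) \<longlongrightarrow> 0) at_top"
proof -
  have e: "((\<lambda>x::real. x ^ i * exp (- \<delta> * x\<^sup>2)) \<longlongrightarrow> 0) at_top" for i
  proof -
    have "((\<lambda>x::real. (x ^ i / exp x) * exp (x - \<delta> * x\<^sup>2)) \<longlongrightarrow> 0 * 0) at_top"
      by (intro tendsto_mult tendsto_power_div_exp_0) (use assms in real_asymp)
    moreover have "(x ^ i / exp x) * exp (x - \<delta> * x\<^sup>2) = x ^ i * exp (- \<delta> * x\<^sup>2)" for x :: real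
      by (simp add: exp_diff exp_minus field_simps)
    ultimately show ?thesis by simp
  qed
  have "((\<lambda>x::real. \<Sum>i\<le>degree R. coeff R i * of_real (x ^ i * exp (- \<delta> * x\<^sup>2))) \<longlongrightarrow> (\<Sum>i\<le>degree R. coeff R i * 0)) at_top"
    using tendsto_of_real[OF e, where 'a=complex] by (intro tendsto_intros) auto
  moreover have "poly R (complex_of_real x) * of_real (exp (- \<delta> * x\<^sup>2)) = (\<Sum>i\<le>degree R. coeff R i * of_real (x ^ i * exp (- \<delta> * x\<^sup>2)))" for x
    by (simp add: poly_altdef sum_distrib_right mult.assoc)
  ultimately show ?thesis by simp
qed

lemma gauss_zero:
  assumes "\<delta> > 0" and eq: "\<And>x::real. poly S (complex_of_real x) = poly R (of_real x) * of_real (exp (- \<delta> * x\<^sup>2))"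
  shows "S = 0"
proof (rule ccontr)
  assume S0: "S \<noteq> 0"
  have "\<exists>d>0. \<exists>r. \<forall>x::real. r \<le> x \<longrightarrow> d \<le> cmod (poly S (of_real x))"
  proof (cases S)
    case (pCons s T)
    show ?thesis
    proof (cases "T = 0")
      case True
      then show ?thesis using pCons S0 by (intro exI[of _ "cmod s"]) auto
    next
      case False
      from poly_infinity[OF False, of 1 s] obtain r where r: "\<And>z. r \<le> cmod z \<Longrightarrow> 1 \<le> cmod (poly (pCons s T) z)" by blast
      show ?thesis
        by (intro exI[of _ 1] conjI exI[of _ r] allI impI) (use r pCons in auto)
    qed
  qed
  then obtain d r where d: "d > 0" and r: "\<And>x::real. r \<le> x \<Longrightarrow> d \<le> cmod (poly S (of_real x))" by blast
  have "((\<lambda>x::real. poly S (complex_of_real x)) \<longlongrightarrow> 0) at_top"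
    unfolding eq by (rule gauss_lim[OF assms(1)])
  then have "\<forall>\<^sub>F x in at_top. dist (poly S (complex_of_real x)) 0 < d"
    using d by (rule tendstoD)
  moreover have "\<forall>\<^sub>F x in at_top. r \<le> (x::real)" by (rule eventually_ge_at_top)
  ultimately have "\<forall>\<^sub>F x in at_top. dist (poly S (complex_of_real x)) 0 < d \<and> r \<le> x"
    by (rule eventually_conj)
  then obtain N where "\<And>x. x \<ge> N \<Longrightarrow> dist (poly S (complex_of_real x)) 0 < d \<and> r \<le> x"
    unfolding eventually_at_top_linorder by blast
  then have "dist (poly S (complex_of_real N)) 0 < d" "r \<le> N" by auto
  then show False using r[of N] by simp
qed

lemma key:
  assumes "\<gamma>2 < \<gamma>1" "\<zeta> \<noteq> 0"
    and eq: "\<And>x::real. \<zeta> * complex_of_real (x\<^sup>2) * U \<gamma>2 Q (of_real x) = U \<gamma>1 R (of_real x)"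
  shows "Q = 0"
proof -
  define \<delta> where "\<delta> = (\<gamma>1 - \<gamma>2) / 2"
  have d: "\<delta> > 0" using assms(1) by (simp add: \<delta>_def)
  have "poly ([:0,0,\<zeta>:] * Q) (complex_of_real x) = poly R (of_real x) * of_real (exp (- \<delta> * x\<^sup>2))" for x
  proof -
    have ex: "exp (- \<gamma>1 * x\<^sup>2 / 2) = exp (- \<gamma>2 * x\<^sup>2 / 2) * exp (- \<delta> * x\<^sup>2)"
      by (simp add: \<delta>_def flip: exp_add) (simp add: field_simps)
    have "(\<zeta> * complex_of_real (x\<^sup>2) * poly Q (of_real x)) * of_real (exp (- \<gamma>2 * x\<^sup>2 / 2))
        = (poly R (of_real x) * of_real (exp (- \<delta> * x\<^sup>2))) * of_real (exp (- \<gamma>2 * x\<^sup>2 / 2))"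
      using eq[of x] unfolding U_real ex by (simp add: ac_simps)
    then have "\<zeta> * complex_of_real (x\<^sup>2) * poly Q (of_real x) = poly R (of_real x) * of_real (exp (- \<delta> * x\<^sup>2))"
      by (subst (asm) mult_cancel_right) simp
    then show ?thesis by (simp add: algebra_simps power2_eq_square)
  qed
  then have "[:0,0,\<zeta>:] * Q = 0" by (rule gauss_zero[OF d])
  then show ?thesis using assms(2) by simp
qed

lemma U_zero: "U \<gamma> 0 z = 0" by (simp add: U_def)
lemma D_zero: "D \<gamma> 0 = 0" by (simp add: D_def)

lemma key0:
  assumes "\<zeta> \<noteq> 0"
    and eq: "\<And>x::real. \<zeta> * complex_of_real (x\<^sup>2) * U \<gamma> Q (of_real x) = 0"
  shows "Q = 0"
  by (rule key[of \<gamma> "\<gamma>+1" \<zeta> Q 0]) (use assms in \<open>auto simp: U_zero\<close>)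

lemma U_lin: "U \<gamma> (smult E P + smult k DDP - [:0,0,a:] * P) z = E * U \<gamma> P z + k * U \<gamma> DDP z - a * z\<^sup>2 * U \<gamma> P z"
  by (simp add: U_def algebra_simps power2_eq_square)

lemma fun_eq:
  "(\<lambda>x. \<Sum>j\<le>m. aa j * complex_of_real (hermite_fun \<alpha> j x)) =
   (\<lambda>x. U \<alpha> (\<Sum>j\<le>m. smult (aa j) (map_poly of_real (Hs \<alpha> j))) (of_real x))"
  by (auto simp: U_real hermite_fun_eq poly_sum poly_of_real sum_distrib_right mult.assoc)

theorem mainTheorem9:
  fixes a c b \<alpha> \<beta> :: real and \<xi> :: complex and m :: nat
    and aa bb :: "nat \<Rightarrow> complex"
  assumes "a > 0" and "c > 0" and "b \<ge> 1" and "(cmod \<xi>)\<^sup>2 < a * c"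
    and "\<alpha> > 0" and "\<beta> > 0"
    and "is_eigenfunction_H a \<xi> c b
           ((\<lambda>x. \<Sum>j\<le>m. aa j * complex_of_real (hermite_fun \<alpha> j x)),
            (\<lambda>x. \<Sum>j\<le>m. bb j * complex_of_real (hermite_fun \<beta> j x)))"
  shows "\<xi> = 0 \<or> \<alpha> = \<beta>"
proof (rule ccontr)
  assume "\<not> (\<xi> = 0 \<or> \<alpha> = \<beta>)"
  then have xi: "\<xi> \<noteq> 0" and cxi: "cnj \<xi> \<noteq> 0" and ab: "\<alpha> \<noteq> \<beta>" by auto
  define P where "P = (\<Sum>j\<le>m. smult (aa j) (map_poly of_real (Hs \<alpha> j)))"
  define Q where "Q = (\<Sum>j\<le>m. smult (bb j) (map_poly of_real (Hs \<beta> j)))"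
  note ev = assms(7)[unfolded fun_eq, folded P_def Q_def]
  have nz: "P \<noteq> 0 \<or> Q \<noteq> 0"
    using ev unfolding is_eigenfunction_H_def by (auto simp: U_zero)
  from ev obtain E where E: "\<And>x::real.
      - U \<alpha> (D \<alpha> (D \<alpha> P)) (of_real x) + complex_of_real (a * x\<^sup>2) * U \<alpha> P (of_real x) + \<xi> * complex_of_real (x\<^sup>2) * U \<beta> Q (of_real x) = E * U \<alpha> P (of_real x)
      \<and> - complex_of_real b * U \<beta> (D \<beta> (D \<beta> Q)) (of_real x) + cnj \<xi> * complex_of_real (x\<^sup>2) * U \<alpha> P (of_real x) + complex_of_real (c * x\<^sup>2) * U \<beta> Q (of_real x) = E * U \<beta> Q (of_real x)"
    unfolding is_eigenfunction_H_def H_AB_def by (auto simp: U_d2)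
  show False
  proof (cases "\<beta> < \<alpha>")
    case True
    have "Q = 0"
    proof (rule key[OF True xi])
      fix x :: real
      show "\<xi> * complex_of_real (x\<^sup>2) * U \<beta> Q (of_real x) = U \<alpha> (smult E P + smult 1 (D \<alpha> (D \<alpha> P)) - [:0,0,of_real a:] * P) (of_real x)"
        unfolding U_lin using E[of x] by (simp add: algebra_simps)
    qed
    moreover have "P = 0"
    proof (rule key0[OF cxi])
      fix x :: real
      show "cnj \<xi> * complex_of_real (x\<^sup>2) * U \<alpha> P (of_real x) = 0"
        using E[of x] \<open>Q = 0\<close> by (simp add: U_zero D_zero)
    qed
    ultimately show False using nz by simp
  next
    case False
    then have lt: "\<alpha> < \<beta>" using ab by simp
    have "P = 0"
    proof (rule key[OF lt cxi])
      fix x :: real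
      show "cnj \<xi> * complex_of_real (x\<^sup>2) * U \<alpha> P (of_real x) = U \<beta> (smult E Q + smult (of_real b) (D \<beta> (D \<beta> Q)) - [:0,0,of_real c:] * Q) (of_real x)"
        unfolding U_lin using E[of x] by (simp add: algebra_simps)
    qed
    moreover have "Q = 0"
    proof (rule key0[OF xi])
      fix x :: real
      show "\<xi> * complex_of_real (x\<^sup>2) * U \<beta> Q (of_real x) = 0"
        using E[of x] \<open>P = 0\<close> by (simp add: U_zero D_zero)
    qed
    ultimately show False using nz by simp
  qed
qed

end
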